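(* Let $R$ (red) and $B$ (blue) be finite sets of points in the plane with $S=B\cup R$ in general position, $r=|R|$ and $|B|=r+2\delta$ for an integer $\delta\ge 0$. Let $k\ge 0$ be an integer. (i) In an $R^k$-rotation, every transition $\delta\rightsquigarrow\delta+1$ or $\delta+1\rightsquigarrow\delta$ of $\omega(R^k_t)$, occurring at angle $t_0$, occurs through a balanced line, i.e. the line $R^k_{t_0}$ is a balanced line. (ii) In a $B^k$-rotation, every transition $\delta\rightsquigarrow\delta-1$ or $\delta-1\rightsquigarrow\delta$ of $\omega(B^k_t)$, occurring at angle $t_0$, occurs through a balanced line, i.e. the line $B^k_{t_0}$ is a balanced line.
   Context: General position means no three points of $S$ are collinear. Coordinates are chosen so that all points of $S$ have distinct abscissae. Each blue point has weight $\omega(p)=+1$ and each red point has weight $\omega(q)=-1$. For an open halfplane $H$, $\omega(H)=\sum_{s\in S\cap H}\omega(s)$. For a directed line $\ell$, $\ell^+$ and $\ell^-$ denote the open halfplanes to the right and to the left of $\ell$, and $\omega(\ell):=\omega(\ell^+)$. A line determined by two points of $S$ is balanced if both open halfplanes it bounds have weight $\delta$. For $P\subseteq S$ and an integer $k$, a $P^k$-rotation is a family of directed lines $P^k_t$, $t\in[0,2\pi]$, where $t$ is the angle of the direction of the line measured from the vertical axis, such that $P^k_0$ contains exactly one point of $P$, and as $t$ increases the line rotates counterclockwise so that (i) $|P\cap P^k_t|=1$ except for finitely many values of $t$ at which $|P\cap P^k_t|=2$, and (ii) whenever $|P\cap P^k_t|=1$, exactly $k$ points of $P$ lie to the right of $P^k_t$.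 The point of $P$ on the line (the pivot) changes exactly when the line contains two points of $P$; $P^k_0=P^k_{2\pi}$. A transition $a\rightsquigarrow a'$ of $\omega(P^k_t)$ at angle $t_0$ means that $\omega(P^k_t)=a$ for all $t<t_0$ sufficiently close to $t_0$ and $\omega(P^k_t)=a'$ for all $t>t_0$ sufficiently close to $t_0$ (angles taken cyclically). *)

theory Defs
  imports "HOL-Analysis.Analysis"
begin

type_synonym pt = "real \<times> real"

text \<open>A directed line with direction angle t (measured counterclockwise from the
  vertical axis, direction vector (-sin t, cos t)) is described by an offset c:
  it is the set of points p with cos t * x(p) + sin t * y(p) = c.\<close>

definition nval :: "real \<Rightarrow> pt \<Rightarrow> real" where
  "nval t p = cos t * fst p + sin t * snd p"

definition dline :: "real \<Rightarrow> real \<Rightarrow> pt set" where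
  "dline t c = {p. nval t p = c}"

definition right_hp :: "real \<Rightarrow> real \<Rightarrow> pt set" where
  "right_hp t c = {p. nval t p > c}"

definition left_hp :: "real \<Rightarrow> real \<Rightarrow> pt set" where
  "left_hp t c = {p. nval t p < c}"

definition weight :: "pt set \<Rightarrow> pt set \<Rightarrow> pt set \<Rightarrow> int" where
  "weight B R H = int (card (B \<inter> H)) - int (card (R \<inter> H))"

definition general_position :: "pt set \<Rightarrow> bool" where
  "general_position S \<longleftrightarrow>
     (\<forall>p\<in>S. \<forall>q\<in>S. \<forall>r\<in>S. p \<noteq> q \<and> p \<noteq> r \<and> q \<noteq> r \<longrightarrow>
        (fst q - fst p) * (snd r - snd p) \<noteq> (snd q - snd p) * (fst r - fst p))"

text \<open>A P^k-rotation, given by the offset function c on [0, 2 pi]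
  (the line at angle t is dline t (c t)); the line moves continuously.\<close>
definition is_rotation :: "pt set \<Rightarrow> nat \<Rightarrow> (real \<Rightarrow> real) \<Rightarrow> bool" where
  "is_rotation P k c \<longleftrightarrow>
     continuous_on {0..2*pi} c \<and>
     c 0 = c (2*pi) \<and>
     card (P \<inter> dline 0 (c 0)) = 1 \<and>
     (\<forall>t\<in>{0..2*pi}. card (P \<inter> dline t (c t)) \<in> {1, 2}) \<and>
     finite {t\<in>{0..2*pi}. card (P \<inter> dline t (c t)) = 2} \<and>
     (\<forall>t\<in>{0..2*pi}. card (P \<inter> dline t (c t)) = 1 \<longrightarrow> card (P \<inter> right_hp t (c t)) = k)"

definition cyc :: "(real \<Rightarrow> real) \<Rightarrow> real \<Rightarrow> real" where
  "cyc c t = c (t - 2*pi * of_int \<lfloor>t / (2*pi)\<rfloor>)"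

definition rot_weight :: "pt set \<Rightarrow> pt set \<Rightarrow> (real \<Rightarrow> real) \<Rightarrow> real \<Rightarrow> int" where
  "rot_weight B R c t = weight B R (right_hp t (cyc c t))"

definition transition :: "pt set \<Rightarrow> pt set \<Rightarrow> (real \<Rightarrow> real) \<Rightarrow> real \<Rightarrow> int \<Rightarrow> int \<Rightarrow> bool" where
  "transition B R c t0 a a' \<longleftrightarrow>
     (\<forall>\<^sub>F t in at_left t0. rot_weight B R c t = a) \<and>
     (\<forall>\<^sub>F t in at_right t0. rot_weight B R c t = a')"

definition balanced :: "pt set \<Rightarrow> pt set \<Rightarrow> int \<Rightarrow> real \<Rightarrow> real \<Rightarrow> bool" where
  "balanced B R \<delta> t c \<longleftrightarrow>
     (\<exists>p\<in>B \<union> R. \<exists>q\<in>B \<union> R. p \<noteq> q \<and> p \<in> dline t c \<and> q \<in> dline t c) \<and>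
     weight B R (right_hp t c) = \<delta> \<and> weight B R (left_hp t c) = \<delta>"

end

theory Submission imports Defs begin
lemma nval_shift: "nval (t - 2*pi* of_int n) p = nval t p"
  unfolding nval_def by (simp add: cos_diff sin_diff)

lemma red:
  fixes t :: real
  defines "t' \<equiv> t - 2*pi * of_int \<lfloor>t / (2*pi)\<rfloor>"
  shows "0 \<le> t'" "t' < 2*pi" "cyc c t = c t'"
    "dline t (cyc c t) = dline t' (c t')" "right_hp t (cyc c t) = right_hp t' (c t')"
proof -
  have pp: "2*pi > 0" by simp
  have a: "of_int \<lfloor>t / (2*pi)\<rfloor> \<le> t/(2*pi)" by (rule of_int_floor_le)
  have b: "t/(2*pi) < of_int \<lfloor>t / (2*pi)\<rfloor> + 1" by (rule real_of_int_floor_add_one_gt)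
  have a': "2*pi * of_int \<lfloor>t / (2*pi)\<rfloor> \<le> t"
    using mult_left_mono[OF a pp[THEN less_imp_le]] by simp
  have b': "t < 2*pi * (of_int \<lfloor>t / (2*pi)\<rfloor> + 1)"
    using mult_strict_left_mono[OF b pp] by simp
  show "0 \<le> t'" using a' unfolding t'_def by simp
  show "t' < 2*pi" using b' unfolding t'_def by (simp add: algebra_simps)
  show cc: "cyc c t = c t'" unfolding cyc_def t'_def ..
  show "dline t (cyc c t) = dline t' (c t')" unfolding cc dline_def t'_def nval_shift ..
  show "right_hp t (cyc c t) = right_hp t' (c t')" unfolding cc right_hp_def t'_def nval_shift ..
qed

lemma rot_facts:
  assumes "is_rotation P k c"
  shows "card (P \<inter> dline t (cyc c t)) \<in> {1,2}"
    "card (P \<inter> dline t (cyc c t)) = 1 \<Longrightarrow> card (P \<inter> right_hp t (cyc c t)) = k"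
  using assms red[where t=t] unfolding is_rotation_def by auto

lemma cyc_cont:
  assumes "is_rotation P k c" "t0 \<in> {0..2*pi}"
  shows "isCont (cyc c) t0"
proof -
  have cc: "continuous_on {0..2*pi} c" and c02: "c 0 = c (2*pi)" using assms unfolding is_rotation_def by auto
  define h where "h t = (if t \<le> 0 then c (t + 2*pi) else if t \<le> 2*pi then c t else c (t - 2*pi))" for t
  have "continuous_on {-2*pi..4*pi} h"
    unfolding h_def
  proof (rule continuous_on_cases_le)
    show "continuous_on {x \<in> {- 2 * pi..4 * pi}. x \<le> 0} (\<lambda>x. c (x + 2 * pi))"
      by (rule continuous_on_compose2[OF cc]) (auto intro!: continuous_intros)
    show "continuous_on {x \<in> {- 2 * pi..4 * pi}. 0 \<le> x} (\<lambda>x. if x \<le> 2 * pi then c x else c (x - 2 * pi))"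
    proof (rule continuous_on_cases_le)
      show "continuous_on {x \<in> {x \<in> {- 2 * pi..4 * pi}. 0 \<le> x}. x \<le> 2 * pi} c"
        by (rule continuous_on_subset[OF cc]) auto
      show "continuous_on {x \<in> {x \<in> {- 2 * pi..4 * pi}. 0 \<le> x}. 2 * pi \<le> x} (\<lambda>x. c (x - 2 * pi))"
        by (rule continuous_on_compose2[OF cc]) (auto intro!: continuous_intros)
    qed (auto intro!: continuous_intros simp: c02)
  qed (auto intro!: continuous_intros simp: c02)
  moreover have "\<forall>t\<in>{-2*pi..4*pi}. cyc c t = h t"
  proof
    fix t assume t: "t \<in> {-2*pi..4*pi}"
    consider "t = -2*pi" | "-2*pi < t \<and> t < 0" | "t = 0" | "0 < t \<and> t < 2*pi" | "t = 2*pi"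
      | "2*pi < t \<and> t < 4*pi" | "t = 4*pi" using t by fastforce
    then show "cyc c t = h t"
    proof cases
      case 1 then show ?thesis by (simp add: cyc_def h_def)
    next
      case 2
      then have "\<lfloor>t/(2*pi)\<rfloor> = -1" by (auto simp: floor_eq_iff field_simps)
      then show ?thesis using 2 by (simp add: cyc_def h_def)
    next
      case 3 then show ?thesis by (simp add: cyc_def h_def c02)
    next
      case 4
      then have "\<lfloor>t/(2*pi)\<rfloor> = 0" by (auto simp: floor_eq_iff field_simps)
      then show ?thesis using 4 by (simp add: cyc_def h_def)
    next
      case 5 have "\<not> 2*pi \<le> 0" using pi_gt_zero by linarith
      moreover have "\<lfloor>t/(2*pi)\<rfloor> = 1" using 5 by simp
      ultimately show ?thesis using 5 by (simp add: cyc_def h_def c02)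
    next
      case 6
      then have "\<lfloor>t/(2*pi)\<rfloor> = 1" by (auto simp: floor_eq_iff field_simps)
      then show ?thesis using 6 by (simp add: cyc_def h_def)
    next
      case 7 have "\<not> 4*pi \<le> 0" "\<not> 4*pi \<le> 2*pi" using pi_gt_zero by linarith+
      moreover have "\<lfloor>t/(2*pi)\<rfloor> = 2" using 7 by simp
      ultimately show ?thesis using 7 not_le[THEN iffD2, OF pi_gt_zero] by (simp add: cyc_def h_def c02)
    qed
  qed
  ultimately have "continuous_on {-2*pi..4*pi} (cyc c)" using continuous_on_cong by metis
  then have "continuous_on {-2*pi<..<4*pi} (cyc c)" by (rule continuous_on_subset) auto
  moreover have "t0 \<in> {-2*pi<..<4*pi}" using assms(2) pi_gt_zero unfolding atLeastAtMost_iff greaterThanLessThan_iff by linarith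
  ultimately show ?thesis using continuous_on_interior[of "{-2*pi<..<4*pi}"] by (simp add: interior_open)
qed

lemma alg1: "(d::real)*(C^2+S^2) = C*(C*d + S*e) - S*(C*e - S*d)"
  by (simp add: power2_eq_square right_diff_distrib distrib_left)
lemma alg2: "(e::real)*(C^2+S^2) = S*(C*d + S*e) + C*(C*e - S*d)"
  by (simp add: power2_eq_square right_diff_distrib distrib_left)
lemma zero_from_cs:
  fixes x C S :: real
  assumes "x*C = 0" "x*S = 0" "C^2 + S^2 = 1" shows "x = 0"
proof -
  have "x = x*(C^2+S^2)" using assms(3) by simp
  also have "\<dots> = (x*C)*C + (x*S)*S" by (simp add: power2_eq_square distrib_left)
  also have "\<dots> = 0" by (simp only: assms(1,2) mult_zero_left add_0)
  finally show ?thesis .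
qed

lemma three_on_line:
  assumes gp: "general_position S" and S: "p \<in> S" "q \<in> S" "r \<in> S"
    and d: "p \<noteq> q" "p \<noteq> r" "q \<noteq> r"
    and on: "p \<in> dline t c" "q \<in> dline t c" "r \<in> dline t c"
  shows False
proof -
  let ?C = "cos t" and ?S = "sin t"
  define a1 where "a1 = fst q - fst p"
  define a2 where "a2 = snd q - snd p"
  define b1 where "b1 = fst r - fst p"
  define b2 where "b2 = snd r - snd p"
  have ea: "a1 * ?C + a2 * ?S = 0" using on unfolding dline_def nval_def a1_def a2_def
    by (auto simp: algebra_simps)
  have eb: "b1 * ?C + b2 * ?S = 0" using on unfolding dline_def nval_def b1_def b2_def
    by (auto simp: algebra_simps)
  have "(a1*b2 - a2*b1) * ?C = b2*(a1 * ?C + a2 * ?S) - a2*(b1 * ?C + b2 * ?S)"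
    by (simp add: algebra_simps)
  then have x1: "(a1*b2 - a2*b1) * ?C = 0" using ea eb by simp
  have "(a1*b2 - a2*b1) * ?S = a1*(b1 * ?C + b2 * ?S) - b1*(a1 * ?C + a2 * ?S)"
    by (simp add: algebra_simps)
  then have x2: "(a1*b2 - a2*b1) * ?S = 0" using ea eb by simp
  have "a1*b2 - a2*b1 = 0" using zero_from_cs[OF x1 x2] by simp
  moreover have "a1*b2 \<noteq> a2*b1"
  proof -
    have "\<forall>p\<in>S. \<forall>q\<in>S. \<forall>r\<in>S. p \<noteq> q \<and> p \<noteq> r \<and> q \<noteq> r \<longrightarrow>
        (fst q - fst p) * (snd r - snd p) \<noteq> (snd q - snd p) * (fst r - fst p)"
      using gp unfolding general_position_def .
    then have "(fst q - fst p) * (snd r - snd p) \<noteq> (snd q - snd p) * (fst r - fst p)"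
      using S d by simp
    then show ?thesis unfolding a1_def a2_def b1_def b2_def .
  qed
  ultimately show False by simp
qed

lemma trig_sep:
  assumes "p \<noteq> q" "nval t0 p = nval t0 q" "t \<noteq> t0" "\<bar>t - t0\<bar> < pi"
  shows "nval t p \<noteq> nval t q"
proof
  assume eq: "nval t p = nval t q"
  define d1 where "d1 = fst p - fst q"
  define d2 where "d2 = snd p - snd q"
  define h where "h = t - t0"
  have t: "t = h + t0" unfolding h_def by simp
  have e0: "cos t0 * d1 + sin t0 * d2 = 0" using assms(2) unfolding nval_def d1_def d2_def
    by (simp add: algebra_simps)
  have e1: "cos t * d1 + sin t * d2 = 0" using eq unfolding nval_def d1_def d2_def
    by (simp add: algebra_simps)
  have "cos t * d1 + sin t * d2 = cos h * (cos t0 * d1 + sin t0 * d2) + sin h * (cos t0 * d2 - sin t0 * d1)"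
    unfolding t cos_add sin_add by (simp add: algebra_simps)
  then have "sin h * (cos t0 * d2 - sin t0 * d1) = 0" using e0 e1 by simp
  moreover have "sin h \<noteq> 0"
  proof -
    have "h \<noteq> 0" "\<bar>h\<bar> < pi" using assms(3,4) unfolding h_def by auto
    show ?thesis
    proof (cases "h > 0")
      case True then show ?thesis using sin_gt_zero[of h] \<open>\<bar>h\<bar> < pi\<close> by simp
    next
      case False then have "-h > 0" "-h < pi" using \<open>h \<noteq> 0\<close> \<open>\<bar>h\<bar> < pi\<close> by auto
      then show ?thesis using sin_gt_zero[of "-h"] by simp
    qed
  qed
  ultimately have k: "cos t0 * d2 - sin t0 * d1 = 0" by simp
  have "d1 = 0" using alg1[of d1 "cos t0" "sin t0" d2] e0 k by simp
  have "d2 = 0" using alg2[of d2 "cos t0" "sin t0" d1] e0 k by simp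
  with \<open>d1 = 0\<close> have "p = q" unfolding d1_def d2_def by (simp add: prod_eq_iff)
  with assms(1) show False by simp
qed

lemma stab:
  assumes "isCont f t0"
  shows "nval t0 s > f t0 \<Longrightarrow> \<forall>\<^sub>F t in at t0. nval t s > f t"
    "nval t0 s < f t0 \<Longrightarrow> \<forall>\<^sub>F t in at t0. nval t s < f t"
proof -
  have "isCont (\<lambda>t. nval t s - f t) t0" unfolding nval_def using assms by (intro continuous_intros)
  then have lim: "((\<lambda>t. nval t s - f t) \<longlongrightarrow> nval t0 s - f t0) (at t0)" unfolding isCont_def .
  show "nval t0 s > f t0 \<Longrightarrow> \<forall>\<^sub>F t in at t0. nval t s > f t"
    using order_tendstoD(1)[OF lim, of 0] by simp
  show "nval t0 s < f t0 \<Longrightarrow> \<forall>\<^sub>F t in at t0. nval t s < f t"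
    using order_tendstoD(2)[OF lim, of 0] by simp
qed

lemma card_split:
  assumes "finite X"
  shows "card X = card (X \<inter> right_hp t c) + card (X \<inter> left_hp t c) + card (X \<inter> dline t c)"
proof -
  have eq: "X = (X \<inter> right_hp t c) \<union> (X \<inter> left_hp t c) \<union> (X \<inter> dline t c)"
    unfolding right_hp_def left_hp_def dline_def by auto
  have "card X = card ((X \<inter> right_hp t c) \<union> (X \<inter> left_hp t c)) + card (X \<inter> dline t c)"
    by (subst eq, rule card_Un_disjoint) (use assms in \<open>auto simp: right_hp_def left_hp_def dline_def\<close>)
  also have "card ((X \<inter> right_hp t c) \<union> (X \<inter> left_hp t c)) = card (X \<inter> right_hp t c) + card (X \<inter> left_hp t c)"
    by (rule card_Un_disjoint) (use assms in \<open>auto simp: right_hp_def left_hp_def\<close>)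
  finally show ?thesis .
qed

lemma generic:
  fixes P Q :: "pt set" and e a a' :: int and k :: nat and c and t0 :: real and u :: "real \<Rightarrow> int"
  assumes fin: "finite P" "finite Q" and disj: "P \<inter> Q = {}" and gp: "general_position (P \<union> Q)"
    and rot: "is_rotation P k c" and t0: "t0 \<in> {0..2*pi}"
    and tot: "int (card Q) - int (card P) = 2*e"
    and evl: "\<forall>\<^sub>F t in at_left t0. u t = a" and evr: "\<forall>\<^sub>F t in at_right t0. u t = a'"
    and aa: "(a = e \<and> a' = e+1) \<or> (a = e+1 \<and> a' = e)"
    and u: "\<And>t. u t = int (card (Q \<inter> right_hp t (cyc c t))) - int (card (P \<inter> right_hp t (cyc c t)))"
  shows "(\<exists>p\<in>P \<union> Q. \<exists>q\<in>P \<union> Q. p \<noteq> q \<and> p \<in> dline t0 (cyc c t0) \<and> q \<in> dline t0 (cyc c t0))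
    \<and> int (card (Q \<inter> right_hp t0 (cyc c t0))) - int (card (P \<inter> right_hp t0 (cyc c t0))) = e
    \<and> int (card (Q \<inter> left_hp t0 (cyc c t0))) - int (card (P \<inter> left_hp t0 (cyc c t0))) = e"
proof -
  define f where "f = cyc c"
  define L where "L t = dline t (f t)" for t
  define Rt where "Rt t = right_hp t (f t)" for t
  define S where "S = P \<union> Q"
  define A where "A = S - L t0"
  have finS: "finite S" using fin unfolding S_def by simp
  have finA: "finite A" using finS unfolding A_def by simp
  have cont: "isCont f t0" unfolding f_def by (rule cyc_cont[OF rot t0])
  have LR: "s \<in> L t \<Longrightarrow> s \<notin> Rt t" for s t unfolding L_def Rt_def dline_def right_hp_def by auto
  have E1: "\<forall>\<^sub>F t in at t0. \<forall>s\<in>A. s \<notin> L t \<and> (s \<in> Rt t \<longleftrightarrow> s \<in> Rt t0)"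
  proof (rule eventually_ball_finite[OF finA], rule ballI)
    fix s assume "s \<in> A"
    then have "nval t0 s \<noteq> f t0" unfolding A_def L_def dline_def by auto
    then consider "nval t0 s > f t0" | "nval t0 s < f t0" by linarith
    then show "\<forall>\<^sub>F t in at t0. s \<notin> L t \<and> (s \<in> Rt t \<longleftrightarrow> s \<in> Rt t0)"
    proof cases
      case 1
      show ?thesis using stab(1)[OF cont 1]
        by (rule eventually_mono) (use 1 in \<open>auto simp: L_def Rt_def dline_def right_hp_def\<close>)
    next
      case 2
      show ?thesis using stab(2)[OF cont 2]
        by (rule eventually_mono) (use 2 in \<open>auto simp: L_def Rt_def dline_def right_hp_def\<close>)
    qed
  qed
  have E2: "\<forall>\<^sub>F t in at t0. t \<noteq> t0 \<and> \<bar>t - t0\<bar> < pi"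
    unfolding eventually_at by (rule exI[of _ pi]) (auto simp: dist_real_def)
  define E where "E t \<longleftrightarrow> (\<forall>s\<in>A. s \<notin> L t \<and> (s \<in> Rt t \<longleftrightarrow> s \<in> Rt t0)) \<and> t \<noteq> t0 \<and> \<bar>t - t0\<bar> < pi" for t
  have evE: "\<forall>\<^sub>F t in at t0. E t" unfolding E_def using eventually_conj[OF E1 E2] .
  have sub: "P \<inter> L t \<subseteq> P \<inter> L t0" if "E t" for t
    using that unfolding E_def A_def S_def by blast
  have card1: "card (P \<inter> L t) = 1" if "E t" for t
  proof -
    have "card (P \<inter> L t) \<in> {1,2}" using rot_facts(1)[OF rot] unfolding L_def f_def by blast
    moreover have "card (P \<inter> L t) \<noteq> 2"
    proof
      assume "card (P \<inter> L t) = 2"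
      then obtain p q where pq: "p \<noteq> q" "P \<inter> L t = {p, q}" by (auto simp: card_2_iff)
      then have "p \<in> L t0" "q \<in> L t0" "p \<in> L t" "q \<in> L t" using sub[OF that] by auto
      then have "nval t0 p = nval t0 q" "nval t p = nval t q" unfolding L_def dline_def by auto
      moreover have "t \<noteq> t0" "\<bar>t - t0\<bar> < pi" using that unfolding E_def by auto
      ultimately show False using trig_sep[OF pq(1)] by blast
    qed
    ultimately show ?thesis by simp
  qed
  have PR: "card (P \<inter> Rt t) = k" if "E t" for t
  proof -
    have "card (P \<inter> dline t (cyc c t)) = 1" using card1[OF that] unfolding L_def f_def .
    from rot_facts(2)[OF rot this] show ?thesis unfolding Rt_def f_def .
  qed
  have Qsplit: "Q \<inter> Rt t = (Q \<inter> Rt t0) \<union> (Q \<inter> L t0 \<inter> Rt t)" if "E t" for t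
  proof
    show "Q \<inter> Rt t \<subseteq> Q \<inter> Rt t0 \<union> Q \<inter> L t0 \<inter> Rt t"
      using that unfolding E_def A_def S_def by blast
    show "Q \<inter> Rt t0 \<union> Q \<inter> L t0 \<inter> Rt t \<subseteq> Q \<inter> Rt t"
      using that LR[of _ t0] unfolding E_def A_def S_def by blast
  qed
  have Qcard: "card (Q \<inter> Rt t) = card (Q \<inter> Rt t0) + card (Q \<inter> L t0 \<inter> Rt t)" if "E t" for t
    unfolding Qsplit[OF that] by (rule card_Un_disjoint) (use fin LR in auto)
  have nbl: "at_left t0 \<noteq> bot" "at_right t0 \<noteq> bot" "at t0 \<noteq> (bot :: real filter)" by auto
  have evEl: "\<forall>\<^sub>F t in at_left t0. E t" and evEr: "\<forall>\<^sub>F t in at_right t0. E t"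
    using evE eventually_at_split by auto
  obtain b where b: "b \<in> Q" "b \<in> L t0"
  proof (rule ccontr)
    assume "\<not> thesis"
    with that have QL: "Q \<inter> L t0 = {}" by blast
    define K where "K = int (card (Q \<inter> Rt t0)) - int k"
    have uK: "u t = K" if "E t" for t
      using u[of t] Qcard[OF that] PR[OF that] QL unfolding K_def Rt_def f_def by simp
    have "\<forall>\<^sub>F t in at_left t0. a = K" using eventually_conj[OF evl evEl]
      by (rule eventually_mono) (use uK in auto)
    then have "a = K" using eventually_const[OF nbl(1)] by simp
    moreover have "\<forall>\<^sub>F t in at_right t0. a' = K" using eventually_conj[OF evr evEr]
      by (rule eventually_mono) (use uK in auto)
    then have "a' = K" using eventually_const[OF nbl(2)] by simp
    ultimately show False using aa by auto
  qed
  obtain p where p: "p \<in> P" "p \<in> L t0"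
  proof -
    have "card (P \<inter> L t0) \<in> {1,2}" using rot_facts(1)[OF rot] unfolding L_def f_def by blast
    then have "P \<inter> L t0 \<noteq> {}" by auto
    then show ?thesis using that by blast
  qed
  have pb: "p \<noteq> b" using p b disj by auto
  have gpS: "general_position S" using gp unfolding S_def .
  have QL: "Q \<inter> L t0 = {b}"
  proof (rule ccontr)
    assume "Q \<inter> L t0 \<noteq> {b}"
    then obtain b' where "b' \<in> Q" "b' \<in> L t0" "b' \<noteq> b" using b by blast
    moreover have "p \<noteq> b'" using p \<open>b' \<in> Q\<close> disj by auto
    ultimately show False using three_on_line[OF gpS, of p b b' t0 "f t0"] p b pb
      unfolding S_def L_def by auto
  qed
  have PL: "P \<inter> L t0 = {p}"
  proof (rule ccontr)
    assume "P \<inter> L t0 \<noteq> {p}"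
    then obtain p' where "p' \<in> P" "p' \<in> L t0" "p' \<noteq> p" using p by blast
    moreover have "p' \<noteq> b" using b \<open>p' \<in> P\<close> disj by auto
    ultimately show False using three_on_line[OF gpS, of p b p' t0 "f t0"] p b pb
      unfolding S_def L_def by auto
  qed
  have PRt: "P \<inter> Rt t = P \<inter> Rt t0" if Et: "E t" for t
  proof -
    obtain x where x: "P \<inter> L t = {x}" using card_1_singletonE[OF card1[OF Et]] by blast
    moreover have "x = p" using sub[OF Et] PL x by auto
    ultimately have "P \<inter> L t = {p}" by simp
    then have "p \<in> L t" by auto
    have EA: "\<forall>s\<in>A. s \<notin> L t \<and> (s \<in> Rt t \<longleftrightarrow> s \<in> Rt t0)" using Et unfolding E_def by blast
    show ?thesis
    proof (intro equalityI subsetI)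
      fix s assume s: "s \<in> P \<inter> Rt t"
      then have "s \<noteq> p" using LR[of p t] \<open>p \<in> L t\<close> by auto
      then have "s \<notin> L t0" using PL s by auto
      then have "s \<in> A" using s unfolding A_def S_def by auto
      then show "s \<in> P \<inter> Rt t0" using EA s by auto
    next
      fix s assume s: "s \<in> P \<inter> Rt t0"
      then have "s \<notin> L t0" using LR[of s t0] by auto
      then have "s \<in> A" using s unfolding A_def S_def by auto
      then show "s \<in> P \<inter> Rt t" using EA s by auto
    qed
  qed
  obtain t1 where "E t1" using eventually_happens[OF evE] nbl(3) by auto
  have PR0: "card (P \<inter> Rt t0) = k" using PR[OF \<open>E t1\<close>] PRt[OF \<open>E t1\<close>] by simp
  define W0 where "W0 = int (card (Q \<inter> Rt t0)) - int (card (P \<inter> Rt t0))"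
  have uW: "u t = W0 \<or> u t = W0 + 1" if "E t" for t
  proof -
    have "Q \<inter> L t0 \<inter> Rt t \<subseteq> {b}" using QL by auto
    then have "card (Q \<inter> L t0 \<inter> Rt t) \<le> card {b}" by (intro card_mono) auto
    then have "card (Q \<inter> L t0 \<inter> Rt t) \<le> 1" by simp
    then show ?thesis
      using u[of t] Qcard[OF that] PR[OF that] PR0 unfolding W0_def Rt_def f_def by linarith
  qed
  have "\<forall>\<^sub>F t in at_left t0. a = W0 \<or> a = W0 + 1" using eventually_conj[OF evl evEl]
    by (rule eventually_mono) (use uW in auto)
  then have aW: "a = W0 \<or> a = W0 + 1" using eventually_const[OF nbl(1)] by simp
  have "\<forall>\<^sub>F t in at_right t0. a' = W0 \<or> a' = W0 + 1" using eventually_conj[OF evr evEr]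
    by (rule eventually_mono) (use uW in auto)
  then have aW': "a' = W0 \<or> a' = W0 + 1" using eventually_const[OF nbl(2)] by simp
  have W0e: "W0 = e" using aW aW' aa by auto
  have cQ: "card Q = card (Q \<inter> Rt t0) + card (Q \<inter> left_hp t0 (f t0)) + 1"
    using card_split[OF fin(2), of t0 "f t0"] QL unfolding Rt_def L_def by simp
  have cP: "card P = card (P \<inter> Rt t0) + card (P \<inter> left_hp t0 (f t0)) + 1"
    using card_split[OF fin(1), of t0 "f t0"] PL unfolding Rt_def L_def by simp
  show ?thesis
  proof (intro conjI)
    show "\<exists>p\<in>P \<union> Q. \<exists>q\<in>P \<union> Q. p \<noteq> q \<and> p \<in> dline t0 (cyc c t0) \<and> q \<in> dline t0 (cyc c t0)"
      using p b pb unfolding L_def f_def by blast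
    show "int (card (Q \<inter> right_hp t0 (cyc c t0))) - int (card (P \<inter> right_hp t0 (cyc c t0))) = e"
      using W0e unfolding W0_def Rt_def f_def .
    show "int (card (Q \<inter> left_hp t0 (cyc c t0))) - int (card (P \<inter> left_hp t0 (cyc c t0))) = e"
      using cQ cP tot W0e unfolding W0_def f_def by linarith
  qed
qed

theorem lemma1:
  fixes B R :: "pt set" and \<delta> :: int and k :: nat
  assumes "finite B" and "finite R" and "B \<inter> R = {}"
    and "general_position (B \<union> R)"
    and "inj_on fst (B \<union> R)"
    and "\<delta> \<ge> 0"
    and "int (card B) = int (card R) + 2 * \<delta>"
  shows "(\<forall>c t0. is_rotation R k c \<and> t0 \<in> {0..2*pi} \<and>
            (transition B R c t0 \<delta> (\<delta> + 1) \<or> transition B R c t0 (\<delta> + 1) \<delta>)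
            \<longrightarrow> balanced B R \<delta> t0 (cyc c t0))
       \<and> (\<forall>c t0. is_rotation B k c \<and> t0 \<in> {0..2*pi} \<and>
            (transition B R c t0 \<delta> (\<delta> - 1) \<or> transition B R c t0 (\<delta> - 1) \<delta>)
            \<longrightarrow> balanced B R \<delta> t0 (cyc c t0))"
proof (intro conjI allI impI)
  fix c t0
  assume h: "is_rotation R k c \<and> t0 \<in> {0..2*pi} \<and>
            (transition B R c t0 \<delta> (\<delta> + 1) \<or> transition B R c t0 (\<delta> + 1) \<delta>)"
  have gp: "general_position (R \<union> B)" using assms(4) by (simp add: Un_commute)
  have disj: "R \<inter> B = {}" using assms(3) by auto
  obtain a a' where ev: "\<forall>\<^sub>F t in at_left t0. rot_weight B R c t = a"
      "\<forall>\<^sub>F t in at_right t0. rot_weight B R c t = a'"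
    and aa: "(a = \<delta> \<and> a' = \<delta>+1) \<or> (a = \<delta>+1 \<and> a' = \<delta>)"
    using h unfolding transition_def by blast
  have "(\<exists>p\<in>R \<union> B. \<exists>q\<in>R \<union> B. p \<noteq> q \<and> p \<in> dline t0 (cyc c t0) \<and> q \<in> dline t0 (cyc c t0))
    \<and> int (card (B \<inter> right_hp t0 (cyc c t0))) - int (card (R \<inter> right_hp t0 (cyc c t0))) = \<delta>
    \<and> int (card (B \<inter> left_hp t0 (cyc c t0))) - int (card (R \<inter> left_hp t0 (cyc c t0))) = \<delta>"
  proof (rule generic[OF assms(2,1) disj gp, of k c t0 \<delta> "rot_weight B R c" a a'])
    show "is_rotation R k c" "t0 \<in> {0..2*pi}" using h by blast+
    show "int (card B) - int (card R) = 2 * \<delta>" using assms(7) by linarith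
    show "\<forall>\<^sub>F t in at_left t0. rot_weight B R c t = a" "\<forall>\<^sub>F t in at_right t0. rot_weight B R c t = a'" by (fact ev)+
    show "a = \<delta> \<and> a' = \<delta> + 1 \<or> a = \<delta> + 1 \<and> a' = \<delta>" by (fact aa)
    show "rot_weight B R c t = int (card (B \<inter> right_hp t (cyc c t))) - int (card (R \<inter> right_hp t (cyc c t)))" for t
      unfolding rot_weight_def weight_def ..
  qed
  moreover have "R \<union> B = B \<union> R" by blast
  ultimately have "(\<exists>p\<in>B \<union> R. \<exists>q\<in>B \<union> R. p \<noteq> q \<and> p \<in> dline t0 (cyc c t0) \<and> q \<in> dline t0 (cyc c t0))
    \<and> int (card (B \<inter> right_hp t0 (cyc c t0))) - int (card (R \<inter> right_hp t0 (cyc c t0))) = \<delta>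
    \<and> int (card (B \<inter> left_hp t0 (cyc c t0))) - int (card (R \<inter> left_hp t0 (cyc c t0))) = \<delta>"
    by (simp only:)
  then show "balanced B R \<delta> t0 (cyc c t0)" unfolding balanced_def weight_def .
next
  fix c t0
  assume h: "is_rotation B k c \<and> t0 \<in> {0..2*pi} \<and>
            (transition B R c t0 \<delta> (\<delta> - 1) \<or> transition B R c t0 (\<delta> - 1) \<delta>)"
  obtain a a' where ev: "\<forall>\<^sub>F t in at_left t0. rot_weight B R c t = a"
      "\<forall>\<^sub>F t in at_right t0. rot_weight B R c t = a'"
    and aa: "(a = \<delta> \<and> a' = \<delta>-1) \<or> (a = \<delta>-1 \<and> a' = \<delta>)"
    using h unfolding transition_def by blast
  have ev': "\<forall>\<^sub>F t in at_left t0. - rot_weight B R c t = -a"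
      "\<forall>\<^sub>F t in at_right t0. - rot_weight B R c t = -a'"
    using ev by (auto elim: eventually_mono)
  have "(\<exists>p\<in>B \<union> R. \<exists>q\<in>B \<union> R. p \<noteq> q \<and> p \<in> dline t0 (cyc c t0) \<and> q \<in> dline t0 (cyc c t0))
    \<and> int (card (R \<inter> right_hp t0 (cyc c t0))) - int (card (B \<inter> right_hp t0 (cyc c t0))) = -\<delta>
    \<and> int (card (R \<inter> left_hp t0 (cyc c t0))) - int (card (B \<inter> left_hp t0 (cyc c t0))) = -\<delta>"
  proof (rule generic[OF assms(1,2,3,4), of k c t0 "-\<delta>" "\<lambda>t. - rot_weight B R c t" "-a" "-a'"])
    show "is_rotation B k c" "t0 \<in> {0..2*pi}" using h by blast+
    show "int (card R) - int (card B) = 2 * - \<delta>" using assms(7) by linarith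
    show "\<forall>\<^sub>F t in at_left t0. - rot_weight B R c t = -a" "\<forall>\<^sub>F t in at_right t0. - rot_weight B R c t = -a'" by (fact ev')+
    show "- a = - \<delta> \<and> - a' = - \<delta> + 1 \<or> - a = - \<delta> + 1 \<and> - a' = - \<delta>" using aa by linarith
    show "- rot_weight B R c t = int (card (R \<inter> right_hp t (cyc c t))) - int (card (B \<inter> right_hp t (cyc c t)))" for t
      unfolding rot_weight_def weight_def by simp
  qed
  then have H1: "\<exists>p\<in>B \<union> R. \<exists>q\<in>B \<union> R. p \<noteq> q \<and> p \<in> dline t0 (cyc c t0) \<and> q \<in> dline t0 (cyc c t0)"
    and H2: "int (card (R \<inter> right_hp t0 (cyc c t0))) - int (card (B \<inter> right_hp t0 (cyc c t0))) = -\<delta>"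
    and H3: "int (card (R \<inter> left_hp t0 (cyc c t0))) - int (card (B \<inter> left_hp t0 (cyc c t0))) = -\<delta>"
    by blast+
  show "balanced B R \<delta> t0 (cyc c t0)" unfolding balanced_def weight_def
  proof (intro conjI)
    show "\<exists>p\<in>B \<union> R. \<exists>q\<in>B \<union> R. p \<noteq> q \<and> p \<in> dline t0 (cyc c t0) \<and> q \<in> dline t0 (cyc c t0)" by (fact H1)
    show "int (card (B \<inter> right_hp t0 (cyc c t0))) - int (card (R \<inter> right_hp t0 (cyc c t0))) = \<delta>" using H2 by linarith
    show "int (card (B \<inter> left_hp t0 (cyc c t0))) - int (card (R \<inter> left_hp t0 (cyc c t0))) = \<delta>" using H3 by linarith
  qed
qed

end
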